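(* Let $\pi$ be a stand-alone statistically secure random oblivious transfer protocol between Alice and Bob based on an authenticated noiseless channel $\mathcal{F}_{\mathsf{AUTH}}$ and the functionality $\mathcal{F}_{P_{V,W|X,Y}}$, and let Bob be honest. Then, given Alice's inputs to and outputs from $\mathcal{F}_{P_{V,W|X,Y}}$ and all the noiseless communication exchanged by Alice and Bob through $\mathcal{F}_{\mathsf{AUTH}}$ during the execution of $\pi$, with overwhelming probability it is possible to extract the output that Bob would obtain both in the case that his choice bit is $c=0$ and in the case that $c=1$.
   Context: The functionality $\mathcal{F}_{P_{V,W|X,Y}}$ (for a conditional distribution $P_{V,W|X,Y}$ on finite alphabets): on inputs $x\in\mathcal{X}$ from Alice and $y\in\mathcal{Y}$ from Bob it samples $(v,w)\sim P_{V,W|X,Y}(\cdot,\cdot|x,y)$ and gives $v$ to Alice and $w$ to Bob. In $\pi$ with security parameter $n$, in round $i$ ($i=1,\dots,n$) the parties input $x_i,y_i$ to $\mathcal{F}_{P_{V,W|X,Y}}$ and receive $v_i,w_i$; they may exchange messages over $\mathcal{F}_{\mathsf{AUTH}}$ at any time. Parties' randomness are random variables $R_A,R_B$ over $\{0,1\}^*$, with protocol actions deterministic functions of the views. Honest Alice outputs $(b_0,b_1)$, honest Bob outputs $(c,d)$. $\delta(P_X,P_Y)=\max_{S}|\sum_{x\in S}P_X(x)-P_Y(x)|$; $I_S(X;Y|Z)=\delta(P_{XYZ},P_ZP_{X|Z}P_{Y|Z})$. Stand-alone statistical security means there is $\epsilon$ negligible in $n$ with: (Correctness) with both honest, $b_0,b_1,c$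 uniform and $\Pr[D=B_C]\ge1-\epsilon$; (Security for Alice) if Alice is honest, $b_0,b_1$ uniform and there exists a random variable $C$ with $I_S(B_0,B_1;C)\le\epsilon$ and $I_S(B_0,B_1;\mathsf{output}_{\mathsf{Bob}}|C,B_C)\le\epsilon$; (Security for Bob) if Bob is honest, $c$ uniform and $I_S(C;\mathsf{output}_{\mathsf{Alice}})\le\epsilon$, where $\mathsf{output}$ denotes the output of the possibly malicious party. Extraction procedures may be computationally unbounded. *)

theory Defs
  imports "HOL-Probability.Probability"
begin

definition stat_dist :: "'a pmf \<Rightarrow> 'a pmf \<Rightarrow> real" where
  "stat_dist p q = (SUP S. \<bar>measure_pmf.prob p S - measure_pmf.prob q S\<bar>)"

text \<open>For a joint distribution J of (X,Y,Z): the distribution P_Z P_{X|Z} P_{Y|Z}.\<close>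
definition cond_indep_version :: "('a \<times> 'b \<times> 'c) pmf \<Rightarrow> ('a \<times> 'b \<times> 'c) pmf" where
  "cond_indep_version J =
     bind_pmf (map_pmf (\<lambda>t. snd (snd t)) J) (\<lambda>z.
       bind_pmf (map_pmf fst (cond_pmf J {t. snd (snd t) = z})) (\<lambda>x.
         bind_pmf (map_pmf (\<lambda>t. fst (snd t)) (cond_pmf J {t. snd (snd t) = z})) (\<lambda>y.
           return_pmf (x, y, z))))"

definition IS_cond :: "('a \<times> 'b \<times> 'c) pmf \<Rightarrow> real" where
  "IS_cond J = stat_dist J (cond_indep_version J)"

definition IS :: "('a \<times> 'b) pmf \<Rightarrow> real" where
  "IS J = stat_dist J (pair_pmf (map_pmf fst J) (map_pmf snd J))"

definition negligible :: "(nat \<Rightarrow> real) \<Rightarrow> bool" where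
  "negligible f \<longleftrightarrow> (\<forall>c::nat. \<exists>N. \<forall>n\<ge>N. \<bar>f n\<bar> < 1 / real n ^ c)"

definition uniform_bit :: "bool pmf \<Rightarrow> bool" where
  "uniform_bit p \<longleftrightarrow> p = bernoulli_pmf (1/2)"

text \<open>Schedule steps: a message from Alice over F_AUTH, a message from Bob over F_AUTH,
  or one invocation of the functionality F_P.\<close>
datatype step = StepA | StepB | StepF

datatype ('x,'y,'v,'w) ev = FromA "bool list" | FromB "bool list" | Call 'x 'y 'v 'w

text \<open>Local view events of one party: messages it sent, messages it received,
  and its own input/output of a call to F_P.\<close>
datatype ('a,'b) lev = Sent "bool list" | Rcvd "bool list" | Fio 'a 'b

fun projA :: "('x,'y,'v,'w) ev \<Rightarrow> ('x,'v) lev" where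
  "projA (FromA m) = Sent m"
| "projA (FromB m) = Rcvd m"
| "projA (Call x y v w) = Fio x v"

fun projB :: "('x,'y,'v,'w) ev \<Rightarrow> ('y,'w) lev" where
  "projB (FromA m) = Rcvd m"
| "projB (FromB m) = Sent m"
| "projB (Call x y v w) = Fio y w"

text \<open>A (possibly malicious) party strategy: a distribution of its randomness over {0,1}^*,
  and deterministic functions of (security parameter, randomness, local history) giving
  the next message and the next input to F_P.\<close>
record ('a,'b) strat =
  rnd :: "nat \<Rightarrow> bool list pmf"
  msg :: "nat \<Rightarrow> bool list \<Rightarrow> ('a,'b) lev list \<Rightarrow> bool list"
  inp :: "nat \<Rightarrow> bool list \<Rightarrow> ('a,'b) lev list \<Rightarrow> 'a"

record ('x,'y,'v,'w) protocol =
  sched :: "nat \<Rightarrow> step list"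
  alice :: "('x,'v) strat"
  bob :: "('y,'w) strat"
  outA :: "nat \<Rightarrow> bool list \<Rightarrow> ('x,'v) lev list \<Rightarrow> bool \<times> bool"   \<comment> \<open>(b0,b1)\<close>
  outB :: "nat \<Rightarrow> bool list \<Rightarrow> ('y,'w) lev list \<Rightarrow> bool \<times> bool"   \<comment> \<open>(c,d)\<close>

fun run :: "('x \<Rightarrow> 'y \<Rightarrow> ('v \<times> 'w) pmf)
   \<Rightarrow> (('x,'v) lev list \<Rightarrow> bool list) \<Rightarrow> (('x,'v) lev list \<Rightarrow> 'x)
   \<Rightarrow> (('y,'w) lev list \<Rightarrow> bool list) \<Rightarrow> (('y,'w) lev list \<Rightarrow> 'y)
   \<Rightarrow> step list \<Rightarrow> ('x,'y,'v,'w) ev list \<Rightarrow> ('x,'y,'v,'w) ev list pmf" where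
  "run P am ai bm bi [] h = return_pmf h"
| "run P am ai bm bi (StepA # s) h = run P am ai bm bi s (h @ [FromA (am (map projA h))])"
| "run P am ai bm bi (StepB # s) h = run P am ai bm bi s (h @ [FromB (bm (map projB h))])"
| "run P am ai bm bi (StepF # s) h =
     bind_pmf (P (ai (map projA h)) (bi (map projB h)))
       (\<lambda>(v,w). run P am ai bm bi s (h @ [Call (ai (map projA h)) (bi (map projB h)) v w]))"

text \<open>Outcome of an execution: (R_A, R_B, full history).\<close>
type_synonym ('x,'y,'v,'w) outcome = "bool list \<times> bool list \<times> ('x,'y,'v,'w) ev list"

definition exec :: "('x \<Rightarrow> 'y \<Rightarrow> ('v \<times> 'w) pmf) \<Rightarrow> (nat \<Rightarrow> step list)
    \<Rightarrow> ('x,'v) strat \<Rightarrow> ('y,'w) strat \<Rightarrow> nat \<Rightarrow> ('x,'y,'v,'w) outcome pmf" where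
  "exec P sch A B n =
     bind_pmf (rnd A n) (\<lambda>ra. bind_pmf (rnd B n) (\<lambda>rb.
       map_pmf (\<lambda>h. (ra, rb, h))
         (run P (msg A n ra) (inp A n ra) (msg B n rb) (inp B n rb) (sch n) [])))"

definition viewA :: "('x,'y,'v,'w) outcome \<Rightarrow> bool list \<times> ('x,'v) lev list" where
  "viewA \<omega> = (fst \<omega>, map projA (snd (snd \<omega>)))"

definition viewB :: "('x,'y,'v,'w) outcome \<Rightarrow> bool list \<times> ('y,'w) lev list" where
  "viewB \<omega> = (fst (snd \<omega>), map projB (snd (snd \<omega>)))"

text \<open>Alice's inputs to / outputs from F_P together with the whole F_AUTH transcript
  (everything Alice sees except her own randomness).\<close>
definition alice_data :: "('x,'y,'v,'w) outcome \<Rightarrow> ('x,'v) lev list" where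
  "alice_data \<omega> = map projA (snd (snd \<omega>))"

definition honest_B0 :: "('x,'y,'v,'w) protocol \<Rightarrow> nat \<Rightarrow> ('x,'y,'v,'w) outcome \<Rightarrow> bool" where
  "honest_B0 \<pi> n \<omega> = fst (outA \<pi> n (fst (viewA \<omega>)) (snd (viewA \<omega>)))"
definition honest_B1 :: "('x,'y,'v,'w) protocol \<Rightarrow> nat \<Rightarrow> ('x,'y,'v,'w) outcome \<Rightarrow> bool" where
  "honest_B1 \<pi> n \<omega> = snd (outA \<pi> n (fst (viewA \<omega>)) (snd (viewA \<omega>)))"
definition honest_C :: "('x,'y,'v,'w) protocol \<Rightarrow> nat \<Rightarrow> ('x,'y,'v,'w) outcome \<Rightarrow> bool" where
  "honest_C \<pi> n \<omega> = fst (outB \<pi> n (fst (viewB \<omega>)) (snd (viewB \<omega>)))"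
definition honest_D :: "('x,'y,'v,'w) protocol \<Rightarrow> nat \<Rightarrow> ('x,'y,'v,'w) outcome \<Rightarrow> bool" where
  "honest_D \<pi> n \<omega> = snd (outB \<pi> n (fst (viewB \<omega>)) (snd (viewB \<omega>)))"

definition well_formed :: "('x,'y,'v,'w) protocol \<Rightarrow> bool" where
  "well_formed \<pi> \<longleftrightarrow> (\<forall>n. length (filter (\<lambda>s. s = StepF) (sched \<pi> n)) = n)"

text \<open>Stand-alone statistical security of random OT. A malicious party's output is taken
  to be its entire view (any other output is a function of it).\<close>
definition secure_ROT :: "('x \<Rightarrow> 'y \<Rightarrow> ('v \<times> 'w) pmf) \<Rightarrow> ('x,'y,'v,'w) protocol
    \<Rightarrow> (nat \<Rightarrow> real) \<Rightarrow> bool" where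
  "secure_ROT P \<pi> \<epsilon> \<longleftrightarrow>
    \<comment> \<open>Correctness\<close>
    (\<forall>n. let E = exec P (sched \<pi>) (alice \<pi>) (bob \<pi>) n in
        uniform_bit (map_pmf (honest_B0 \<pi> n) E) \<and> uniform_bit (map_pmf (honest_B1 \<pi> n) E)
      \<and> uniform_bit (map_pmf (honest_C \<pi> n) E)
      \<and> measure_pmf.prob E {\<omega>. honest_D \<pi> n \<omega> =
            (if honest_C \<pi> n \<omega> then honest_B1 \<pi> n \<omega> else honest_B0 \<pi> n \<omega>)} \<ge> 1 - \<epsilon> n)
  \<and> \<comment> \<open>Security for Alice\<close>
    (\<forall>B' n. let E = exec P (sched \<pi>) (alice \<pi>) B' n in
        uniform_bit (map_pmf (honest_B0 \<pi> n) E) \<and> uniform_bit (map_pmf (honest_B1 \<pi> n) E)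
      \<and> (\<exists>Q :: (('x,'y,'v,'w) outcome \<times> bool) pmf. map_pmf fst Q = E
          \<and> IS (map_pmf (\<lambda>(\<omega>,c). ((honest_B0 \<pi> n \<omega>, honest_B1 \<pi> n \<omega>), c)) Q) \<le> \<epsilon> n
          \<and> IS_cond (map_pmf (\<lambda>(\<omega>,c). ((honest_B0 \<pi> n \<omega>, honest_B1 \<pi> n \<omega>), viewB \<omega>,
                (c, if c then honest_B1 \<pi> n \<omega> else honest_B0 \<pi> n \<omega>))) Q) \<le> \<epsilon> n))
  \<and> \<comment> \<open>Security for Bob\<close>
    (\<forall>A' n. let E = exec P (sched \<pi>) A' (bob \<pi>) n in
        uniform_bit (map_pmf (honest_C \<pi> n) E)
      \<and> IS (map_pmf (\<lambda>\<omega>. (honest_C \<pi> n \<omega>, viewA \<omega>)) E) \<le> \<epsilon> n)"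

end

theory Submission
  imports Defs
begin

fun wA :: "(('x,'v) lev list \<Rightarrow> bool list) \<Rightarrow> (('x,'v) lev list \<Rightarrow> 'x) \<Rightarrow> step list
   \<Rightarrow> ('x,'v) lev list \<Rightarrow> ('x,'v) lev list \<Rightarrow> bool" where
  "wA am ai [] la r = (r = [])"
| "wA am ai (StepA # s) la r = (case r of Sent m # r' \<Rightarrow> m = am la \<and> wA am ai s (la @ [Sent m]) r' | _ \<Rightarrow> False)"
| "wA am ai (StepB # s) la r = (case r of Rcvd m # r' \<Rightarrow> wA am ai s (la @ [Rcvd m]) r' | _ \<Rightarrow> False)"
| "wA am ai (StepF # s) la r = (case r of Fio x v # r' \<Rightarrow> x = ai la \<and> wA am ai s (la @ [Fio x v]) r' | _ \<Rightarrow> False)"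

fun wB :: "('x \<Rightarrow> 'y \<Rightarrow> ('v \<times> 'w) pmf) \<Rightarrow> (('y,'w) lev list \<Rightarrow> bool list) \<Rightarrow> (('y,'w) lev list \<Rightarrow> 'y)
   \<Rightarrow> step list \<Rightarrow> ('x,'y,'v,'w) ev list \<Rightarrow> ('x,'y,'v,'w) ev list \<Rightarrow> real" where
  "wB P bm bi [] h r = (if r = [] then 1 else 0)"
| "wB P bm bi (StepA # s) h r = (case r of FromA m # r' \<Rightarrow> wB P bm bi s (h @ [FromA m]) r' | _ \<Rightarrow> 0)"
| "wB P bm bi (StepB # s) h r = (case r of FromB m # r' \<Rightarrow>
      (if m = bm (map projB h) then wB P bm bi s (h @ [FromB m]) r' else 0) | _ \<Rightarrow> 0)"
| "wB P bm bi (StepF # s) h r = (case r of Call x y v w # r' \<Rightarrow>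
      (if y = bi (map projB h) then pmf (P x y) (v,w) * wB P bm bi s (h @ [Call x y v w]) r' else 0) | _ \<Rightarrow> 0)"

lemma run_support: "h' \<in> set_pmf (run P am ai bm bi s h) \<Longrightarrow> \<exists>r. h' = h @ r"
proof (induction s arbitrary: h)
  case Nil then show ?case by simp
next
  case (Cons st s)
  show ?case
  proof (cases st)
    case StepA then show ?thesis using Cons by fastforce
  next
    case StepB then show ?thesis using Cons by fastforce
  next
    case StepF then show ?thesis using Cons by (fastforce split: prod.splits)
  qed
qed

lemma run_pmf: "pmf (run P am ai bm bi s h) (h @ r) =
   (if wA am ai s (map projA h) (map projA r) then wB P bm bi s h r else 0)"
proof (induction s arbitrary: h r)
  case Nil then show ?case by (simp add: pmf_return)
next
  case (Cons st s)
  have nz: "pmf (run P am ai bm bi s (h @ [e])) (h @ r) = 0" if "r = [] \<or> hd r \<noteq> e" for e r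
  proof -
    have "h @ r \<notin> set_pmf (run P am ai bm bi s (h @ [e]))"
      using run_support[of "h @ r" P am ai bm bi s "h @ [e]"] that by (cases r) auto
    then show ?thesis by (simp add: set_pmf_eq)
  qed
  show ?case
  proof (cases st)
    case StepA
    show ?thesis
    proof (cases r)
      case Nil then show ?thesis using StepA nz[of "[]", simplified] by simp
    next
      case (Cons e r')
      show ?thesis
      proof (cases "e = FromA (am (map projA h))")
        case True then show ?thesis using StepA Cons Cons.IH[of "h @ [e]" r'] by simp
      next
        case False
        then have "pmf (run P am ai bm bi s (h @ [FromA (am (map projA h))])) (h @ r) = 0"
          using nz Cons by auto
        then show ?thesis using StepA Cons False by (cases e) auto
      qed
    qed
  next
    case StepB
    show ?thesis
    proof (cases r)
      case Nil then show ?thesis using StepB nz[of "[]", simplified] by simp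
    next
      case (Cons e r')
      show ?thesis
      proof (cases "e = FromB (bm (map projB h))")
        case True then show ?thesis using StepB Cons Cons.IH[of "h @ [e]" r'] by simp
      next
        case False
        then have "pmf (run P am ai bm bi s (h @ [FromB (bm (map projB h))])) (h @ r) = 0"
          using nz Cons by auto
        then show ?thesis using StepB Cons False by (cases e) auto
      qed
    qed
  next
    case StepF
    define x0 where "x0 = ai (map projA h)"
    define y0 where "y0 = bi (map projB h)"
    have L: "pmf (run P am ai bm bi (st # s) h) (h @ r) =
      measure_pmf.expectation (P x0 y0) (\<lambda>(v,w). pmf (run P am ai bm bi s (h @ [Call x0 y0 v w])) (h @ r))"
      using StepF unfolding x0_def y0_def by (simp only: run.simps pmf_bind split_def)
    show ?thesis
    proof (cases "\<exists>v w r'. r = Call x0 y0 v w # r'")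
      case True
      then obtain v w r' where r: "r = Call x0 y0 v w # r'" by blast
      have "measure_pmf.expectation (P x0 y0) (\<lambda>(v',w'). pmf (run P am ai bm bi s (h @ [Call x0 y0 v' w'])) (h @ r))
          = (\<Sum>a\<in>{(v,w)}. (case a of (v',w') \<Rightarrow> pmf (run P am ai bm bi s (h @ [Call x0 y0 v' w'])) (h @ r)) * pmf (P x0 y0) a)"
      proof (rule integral_measure_pmf_real)
        fix a assume "a \<in> set_pmf (P x0 y0)" "(case a of (v',w') \<Rightarrow> pmf (run P am ai bm bi s (h @ [Call x0 y0 v' w'])) (h @ r)) \<noteq> 0"
        then show "a \<in> {(v,w)}"
        proof (cases a)
          case (Pair a1 a2)
          with \<open>(case a of (v',w') \<Rightarrow> pmf (run P am ai bm bi s (h @ [Call x0 y0 v' w'])) (h @ r)) \<noteq> 0\<close>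
          have "pmf (run P am ai bm bi s (h @ [Call x0 y0 a1 a2])) (h @ r) \<noteq> 0" by simp
          then have "\<not> (r = [] \<or> hd r \<noteq> Call x0 y0 a1 a2)" using nz by blast
          then show ?thesis using r Pair by simp
        qed
      qed simp
      also have "\<dots> = pmf (run P am ai bm bi s ((h @ [Call x0 y0 v w]))) ((h @ [Call x0 y0 v w]) @ r') * pmf (P x0 y0) (v,w)"
        using r by simp
      finally have "pmf (run P am ai bm bi (st # s) h) (h @ r) = pmf (run P am ai bm bi s ((h @ [Call x0 y0 v w]))) ((h @ [Call x0 y0 v w]) @ r') * pmf (P x0 y0) (v,w)"
        using L by simp
      also have "\<dots> = (if wA am ai s (map projA h @ [Fio x0 v]) (map projA r') then wB P bm bi s (h @ [Call x0 y0 v w]) r' else 0) * pmf (P x0 y0) (v,w)"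
        using Cons.IH[of "h @ [Call x0 y0 v w]" r'] by simp
      finally show ?thesis using StepF r by (simp add: x0_def y0_def)
    next
      case False
      have "measure_pmf.expectation (P x0 y0) (\<lambda>(v',w'). pmf (run P am ai bm bi s (h @ [Call x0 y0 v' w'])) (h @ r)) = 0"
      proof (rule integral_eq_zero_AE, rule AE_I2)
        fix a show "(case a of (v',w') \<Rightarrow> pmf (run P am ai bm bi s (h @ [Call x0 y0 v' w'])) (h @ r)) = 0"
        proof (cases a)
          case (Pair a1 a2)
          have "r = [] \<or> hd r \<noteq> Call x0 y0 a1 a2"
            using False by (cases r) auto
          then show ?thesis using nz Pair by simp
        qed
      qed
      moreover have "\<not> wA am ai (st # s) (map projA h) (map projA r) \<or> wB P bm bi (st # s) h r = 0"
      proof (cases r)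
        case Nil then show ?thesis using StepF by simp
      next
        case (Cons e r')
        then show ?thesis using StepF False unfolding x0_def y0_def
          by (cases e) auto
      qed
      ultimately show ?thesis using L by auto
    qed
  qed
qed


lemma rect:
  fixes pA :: "'ra pmf" and pB :: "'rb pmf" and R :: "'ra \<Rightarrow> 'rb \<Rightarrow> 'h pmf" and \<pi> :: "'h \<Rightarrow> 'd"
  assumes R: "\<And>ra rb h. pmf (R ra rb) h = (if a ra (\<pi> h) then b rb h else 0)"
  shows "emeasure (measure_pmf (bind_pmf pA (\<lambda>ra. bind_pmf pB (\<lambda>rb. map_pmf (\<lambda>h. (ra,rb,h)) (R ra rb)))))
      {\<omega>. \<pi> (snd (snd \<omega>)) = d \<and> X (fst \<omega>) \<and> Y (fst (snd \<omega>)) (snd (snd \<omega>))}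
    = emeasure (measure_pmf pA) {ra. a ra d \<and> X ra} *
      (\<integral>\<^sup>+rb. (\<integral>\<^sup>+h. ennreal (b rb h) * indicator {h. \<pi> h = d \<and> Y rb h} h \<partial>count_space UNIV) \<partial>measure_pmf pB)"
proof -
  define G where "G rb = (\<integral>\<^sup>+h. ennreal (b rb h) * indicator {h. \<pi> h = d \<and> Y rb h} h \<partial>count_space UNIV)" for rb
  let ?S = "{\<omega>. \<pi> (snd (snd \<omega>)) = d \<and> X (fst \<omega>) \<and> Y (fst (snd \<omega>)) (snd (snd \<omega>))}"
  have inner: "emeasure (measure_pmf (map_pmf (\<lambda>h. (ra,rb,h)) (R ra rb))) ?S
      = indicator {ra. a ra d \<and> X ra} ra * G rb" for ra rb
  proof -
    have "emeasure (measure_pmf (map_pmf (\<lambda>h. (ra,rb,h)) (R ra rb))) ?S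
        = emeasure (measure_pmf (R ra rb)) {h. \<pi> h = d \<and> X ra \<and> Y rb h}"
      by (simp add: emeasure_map_pmf vimage_def)
    also have "\<dots> = (\<integral>\<^sup>+h. indicator {h. \<pi> h = d \<and> X ra \<and> Y rb h} h \<partial>measure_pmf (R ra rb))"
      by simp
    also have "\<dots> = (\<integral>\<^sup>+h. ennreal (pmf (R ra rb) h) * indicator {h. \<pi> h = d \<and> X ra \<and> Y rb h} h \<partial>count_space UNIV)"
      by (rule nn_integral_measure_pmf)
    also have "\<dots> = (\<integral>\<^sup>+h. indicator {ra. a ra d \<and> X ra} ra * (ennreal (b rb h) * indicator {h. \<pi> h = d \<and> Y rb h} h) \<partial>count_space UNIV)"
      by (rule nn_integral_cong) (auto simp: R indicator_def)
    also have "\<dots> = indicator {ra. a ra d \<and> X ra} ra * G rb"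
      unfolding G_def by (rule nn_integral_cmult) simp
    finally show ?thesis .
  qed
  have "emeasure (measure_pmf (bind_pmf pA (\<lambda>ra. bind_pmf pB (\<lambda>rb. map_pmf (\<lambda>h. (ra,rb,h)) (R ra rb))))) ?S
     = (\<integral>\<^sup>+ra. (\<integral>\<^sup>+rb. indicator {ra. a ra d \<and> X ra} ra * G rb \<partial>measure_pmf pB) \<partial>measure_pmf pA)"
    by (simp only: emeasure_bind_pmf inner)
  also have "\<dots> = (\<integral>\<^sup>+ra. indicator {ra. a ra d \<and> X ra} ra * (\<integral>\<^sup>+rb. G rb \<partial>measure_pmf pB) \<partial>measure_pmf pA)"
    by (rule nn_integral_cong, rule nn_integral_cmult) simp
  also have "\<dots> = (\<integral>\<^sup>+ra. indicator {ra. a ra d \<and> X ra} ra \<partial>measure_pmf pA) * (\<integral>\<^sup>+rb. G rb \<partial>measure_pmf pB)"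
    by (rule nn_integral_multc) simp
  also have "\<dots> = emeasure (measure_pmf pA) {ra. a ra d \<and> X ra} * (\<integral>\<^sup>+rb. G rb \<partial>measure_pmf pB)"
    by simp
  finally show ?thesis unfolding G_def .
qed


lemma ennreal_aux:
  fixes fT fF gT gF :: ennreal
  assumes "fT + fF \<noteq> \<top>" "(fT+fF)*gF \<le> (fT+fF)*gT"
  shows "fT*gT + fF*gF \<le> (fT+fF)*gT"
proof (cases "fT + fF = 0")
  case True then show ?thesis by simp
next
  case False
  then have "gF \<le> gT" using assms ennreal_mult_le_mult_iff by blast
  then have "fF*gF \<le> fF*gT" by (simp add: mult_left_mono)
  then show ?thesis by (simp add: distrib_right add_left_mono)
qed

lemma pointwise:
  fixes pA :: "'ra pmf" and pB :: "'rb pmf" and R :: "'ra \<Rightarrow> 'rb \<Rightarrow> 'h pmf" and \<pi> :: "'h \<Rightarrow> 'd"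
  assumes R: "\<And>ra rb h. pmf (R ra rb) h = (if a ra (\<pi> h) then b rb h else 0)"
  defines "E \<equiv> bind_pmf pA (\<lambda>ra. bind_pmf pB (\<lambda>rb. map_pmf (\<lambda>h. (ra,rb,h)) (R ra rb)))"
  shows "emeasure (measure_pmf E) {\<omega>. \<pi> (snd (snd \<omega>)) = d \<and> Y (fst (snd \<omega>)) (snd (snd \<omega>)) (Bc (fst \<omega>))}
   \<le> emeasure (measure_pmf E) {\<omega>. \<pi> (snd (snd \<omega>)) = d \<and> Y (fst (snd \<omega>)) (snd (snd \<omega>))
        (emeasure (measure_pmf E) {\<omega>. \<pi> (snd (snd \<omega>)) = d \<and> Y (fst (snd \<omega>)) (snd (snd \<omega>)) False}
          \<le> emeasure (measure_pmf E) {\<omega>. \<pi> (snd (snd \<omega>)) = d \<and> Y (fst (snd \<omega>)) (snd (snd \<omega>)) True})}"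
proof -
  define G where "G c = (\<integral>\<^sup>+rb. (\<integral>\<^sup>+h. ennreal (b rb h) * indicator {h. \<pi> h = d \<and> Y rb h c} h \<partial>count_space UNIV) \<partial>measure_pmf pB)" for c
  define fT where "fT = emeasure (measure_pmf pA) {ra. a ra d \<and> Bc ra}"
  define fF where "fF = emeasure (measure_pmf pA) {ra. a ra d \<and> \<not> Bc ra}"
  have rT: "emeasure (measure_pmf E) {\<omega>. \<pi> (snd (snd \<omega>)) = d \<and> Bc (fst \<omega>) \<and> Y (fst (snd \<omega>)) (snd (snd \<omega>)) True} = fT * G True"
    unfolding E_def fT_def G_def by (rule rect[where R=R and a=a and b=b and \<pi>=\<pi>, OF R])
  have rF: "emeasure (measure_pmf E) {\<omega>. \<pi> (snd (snd \<omega>)) = d \<and> \<not> Bc (fst \<omega>) \<and> Y (fst (snd \<omega>)) (snd (snd \<omega>)) False} = fF * G False"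
    unfolding E_def fF_def G_def by (rule rect[where R=R and a=a and b=b and \<pi>=\<pi>, OF R])
  have fsum: "emeasure (measure_pmf pA) {ra. a ra d \<and> True} = fT + fF"
    unfolding fT_def fF_def by (subst plus_emeasure) (auto intro!: arg_cong[where f="emeasure _"])
  have rall: "emeasure (measure_pmf E) {\<omega>. \<pi> (snd (snd \<omega>)) = d \<and> Y (fst (snd \<omega>)) (snd (snd \<omega>)) c} = (fT + fF) * G c" for c
    using rect[where R=R and a=a and b=b and \<pi>=\<pi>, OF R, of pA pB d "\<lambda>_. True" "\<lambda>rb h. Y rb h c"] unfolding E_def G_def fsum[symmetric] by simp
  have fin: "fT + fF \<noteq> \<top>" using fsum[symmetric] by (simp add: measure_pmf.emeasure_finite)
  have "{\<omega>. \<pi> (snd (snd \<omega>)) = d \<and> Y (fst (snd \<omega>)) (snd (snd \<omega>)) (Bc (fst \<omega>))}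
     = {\<omega>. \<pi> (snd (snd \<omega>)) = d \<and> Bc (fst \<omega>) \<and> Y (fst (snd \<omega>)) (snd (snd \<omega>)) True}
     \<union> {\<omega>. \<pi> (snd (snd \<omega>)) = d \<and> \<not> Bc (fst \<omega>) \<and> Y (fst (snd \<omega>)) (snd (snd \<omega>)) False}"
    by (auto; metis (full_types))
  then have "emeasure (measure_pmf E) {\<omega>. \<pi> (snd (snd \<omega>)) = d \<and> Y (fst (snd \<omega>)) (snd (snd \<omega>)) (Bc (fst \<omega>))}
      = fT * G True + fF * G False"
    by (simp add: rT[symmetric] rF[symmetric] plus_emeasure, subst plus_emeasure) auto
  also have "\<dots> \<le> emeasure (measure_pmf E) {\<omega>. \<pi> (snd (snd \<omega>)) = d \<and> Y (fst (snd \<omega>)) (snd (snd \<omega>))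
        (emeasure (measure_pmf E) {\<omega>. \<pi> (snd (snd \<omega>)) = d \<and> Y (fst (snd \<omega>)) (snd (snd \<omega>)) False}
          \<le> emeasure (measure_pmf E) {\<omega>. \<pi> (snd (snd \<omega>)) = d \<and> Y (fst (snd \<omega>)) (snd (snd \<omega>)) True})}"
  proof (cases "(fT + fF) * G False \<le> (fT + fF) * G True")
    case True
    then show ?thesis using ennreal_aux[OF fin True] by (simp add: rall)
  next
    case False
    then have le: "(fT + fF) * G True \<le> (fT + fF) * G False" by simp
    have "fF * G False + fT * G True \<le> (fF + fT) * G False"
      using ennreal_aux[of fF fT "G True" "G False"] fin le by (simp add: add.commute)
    then show ?thesis using False by (simp add: rall add.commute)
  qed
  finally show ?thesis .
qed


lemma decomp:
  fixes E :: "'o pmf" and f :: "'o \<Rightarrow> 'd"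
  assumes "\<And>d. emeasure (measure_pmf E) (S1 \<inter> f -` {d}) \<le> emeasure (measure_pmf E) (S2 \<inter> f -` {d})"
  shows "emeasure (measure_pmf E) S1 \<le> emeasure (measure_pmf E) S2"
proof -
  let ?I = "f ` set_pmf E"
  have eq: "emeasure (measure_pmf E) S = (\<integral>\<^sup>+d. emeasure (measure_pmf E) (S \<inter> f -` {d}) \<partial>count_space ?I)" for S
  proof -
    have "emeasure (measure_pmf E) S = emeasure (measure_pmf E) (S \<inter> set_pmf E)"
      by (simp add: emeasure_Int_set_pmf)
    also have "S \<inter> set_pmf E = (\<Union>d\<in>?I. S \<inter> set_pmf E \<inter> f -` {d})" by auto
    also have "emeasure (measure_pmf E) \<dots> = (\<integral>\<^sup>+d. emeasure (measure_pmf E) (S \<inter> set_pmf E \<inter> f -` {d}) \<partial>count_space ?I)"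
      by (rule emeasure_UN_countable) (auto simp: disjoint_family_on_def)
    also have "\<dots> = (\<integral>\<^sup>+d. emeasure (measure_pmf E) (S \<inter> f -` {d}) \<partial>count_space ?I)"
    proof (rule nn_integral_cong)
      fix d
      have "S \<inter> set_pmf E \<inter> f -` {d} = (S \<inter> f -` {d}) \<inter> set_pmf E" by auto
      then show "emeasure (measure_pmf E) (S \<inter> set_pmf E \<inter> f -` {d}) = emeasure (measure_pmf E) (S \<inter> f -` {d})"
        by (simp add: emeasure_Int_set_pmf)
    qed
    finally show ?thesis .
  qed
  show ?thesis unfolding eq[of S1] eq[of S2]
    by (rule nn_integral_mono) (rule assms)
qed

lemma negl2: "negligible \<epsilon> \<Longrightarrow> negligible (\<lambda>n. 2 * \<epsilon> n)"
  unfolding negligible_def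
proof
  fix c :: nat
  assume H: "\<forall>c::nat. \<exists>N. \<forall>n\<ge>N. \<bar>\<epsilon> n\<bar> < 1 / real n ^ c"
  then obtain N where N: "\<And>n. n \<ge> N \<Longrightarrow> \<bar>\<epsilon> n\<bar> < 1 / real n ^ Suc c" by blast
  show "\<exists>N. \<forall>n\<ge>N. \<bar>2 * \<epsilon> n\<bar> < 1 / real n ^ c"
  proof (intro exI allI impI)
    fix n assume "max N 2 \<le> n"
    then have n: "n \<ge> N" "real n \<ge> 2" by auto
    have pos: "real n ^ c > 0" using n by simp
    have "\<bar>2 * \<epsilon> n\<bar> < 2 / real n ^ Suc c" using N[OF n(1)] by (simp add: field_simps)
    also have "\<dots> = (2 / real n) * (1 / real n ^ c)" by (simp add: field_simps)
    also have "\<dots> \<le> 1 * (1 / real n ^ c)"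
      using n pos by (intro mult_right_mono) (auto simp: field_simps)
    finally show "\<bar>2 * \<epsilon> n\<bar> < 1 / real n ^ c" by simp
  qed
qed


theorem lemma1:
  fixes P :: "'x::finite \<Rightarrow> 'y::finite \<Rightarrow> ('v::finite \<times> 'w::finite) pmf"
    and \<pi> :: "('x,'y,'v,'w) protocol"
    and \<epsilon> :: "nat \<Rightarrow> real"
  assumes "well_formed \<pi>"
    and "negligible \<epsilon>"
    and "secure_ROT P \<pi> \<epsilon>"
  shows "\<exists>\<epsilon>' (g :: nat \<Rightarrow> ('x,'v) lev list \<Rightarrow> bool \<Rightarrow> bool). negligible \<epsilon>' \<and>
    (\<forall>n c. let E = exec P (sched \<pi>) (alice \<pi>) (bob \<pi>) n in
       measure_pmf.prob E {\<omega>. honest_C \<pi> n \<omega> = c \<and> honest_D \<pi> n \<omega> = g n (alice_data \<omega>) c}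
         \<ge> (1 - \<epsilon>' n) * measure_pmf.prob E {\<omega>. honest_C \<pi> n \<omega> = c})"
proof -
  define g :: "nat \<Rightarrow> ('x,'v) lev list \<Rightarrow> bool \<Rightarrow> bool" where
    "g n d c = (emeasure (measure_pmf (exec P (sched \<pi>) (alice \<pi>) (bob \<pi>) n))
        {\<omega>. alice_data \<omega> = d \<and> honest_C \<pi> n \<omega> = c \<and> honest_D \<pi> n \<omega> = False}
      \<le> emeasure (measure_pmf (exec P (sched \<pi>) (alice \<pi>) (bob \<pi>) n))
        {\<omega>. alice_data \<omega> = d \<and> honest_C \<pi> n \<omega> = c \<and> honest_D \<pi> n \<omega> = True})" for n d c
  have main: "measure_pmf.prob E {\<omega>. honest_C \<pi> n \<omega> = c \<and> honest_D \<pi> n \<omega> = g n (alice_data \<omega>) c}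
         \<ge> (1 - 2 * \<epsilon> n) * measure_pmf.prob E {\<omega>. honest_C \<pi> n \<omega> = c}"
    if E_def: "E = exec P (sched \<pi>) (alice \<pi>) (bob \<pi>) n" for n c E
  proof -
    let ?C = "honest_C \<pi> n" and ?D = "honest_D \<pi> n" and ?B0 = "honest_B0 \<pi> n" and ?B1 = "honest_B1 \<pi> n"
    have corr: "uniform_bit (map_pmf ?C E)"
      "measure_pmf.prob E {\<omega>. ?D \<omega> = (if ?C \<omega> then ?B1 \<omega> else ?B0 \<omega>)} \<ge> 1 - \<epsilon> n"
      using assms(3) unfolding secure_ROT_def Let_def E_def by blast+
    have half: "measure_pmf.prob E {\<omega>. ?C \<omega> = c} = 1/2"
    proof -
      have "measure_pmf.prob E {\<omega>. ?C \<omega> = c} = measure_pmf.prob (map_pmf ?C E) {c}"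
        by (simp add: vimage_def)
      also have "\<dots> = 1/2" using corr(1) unfolding uniform_bit_def by (simp add: measure_pmf_single)
      finally show ?thesis .
    qed
    define S1 where "S1 = {\<omega>. ?C \<omega> = c \<and> ?D \<omega> = (if ?C \<omega> then ?B1 \<omega> else ?B0 \<omega>)}"
    define S2 where "S2 = {\<omega>. ?C \<omega> = c \<and> ?D \<omega> = g n (alice_data \<omega>) c}"
    define A where "A = alice \<pi>"
    define B where "B = bob \<pi>"
    define R where "R ra rb = run P (msg A n ra) (inp A n ra) (msg B n rb) (inp B n rb) (sched \<pi> n) []" for ra rb
    define a where "a ra la = wA (msg A n ra) (inp A n ra) (sched \<pi> n) [] la" for ra la
    define b where "b rb h = wB P (msg B n rb) (inp B n rb) (sched \<pi> n) [] h" for rb h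
    have Rp: "pmf (R ra rb) h = (if a ra (map projA h) then b rb h else 0)" for ra rb h
      using run_pmf[of P "msg A n ra" "inp A n ra" "msg B n rb" "inp B n rb" "sched \<pi> n" "[]" h]
      unfolding R_def a_def b_def by simp
    have Eeq: "E = bind_pmf (rnd A n) (\<lambda>ra. bind_pmf (rnd B n) (\<lambda>rb. map_pmf (\<lambda>h. (ra,rb,h)) (R ra rb)))"
      unfolding E_def exec_def R_def A_def B_def ..
    define Y where "Y rb (h :: ('x,'y,'v,'w) ev list) bb = (fst (outB \<pi> n rb (map projB h)) = c \<and> snd (outB \<pi> n rb (map projB h)) = bb)" for rb h bb
    have le: "emeasure (measure_pmf E) S1 \<le> emeasure (measure_pmf E) S2"
    proof (rule decomp[where f = alice_data])
      fix d
      define Bc where "Bc ra = (if c then snd else fst) (outA \<pi> n ra d)" for ra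
      have s1: "S1 \<inter> alice_data -` {d} = {\<omega>. map projA (snd (snd \<omega>)) = d \<and> Y (fst (snd \<omega>)) (snd (snd \<omega>)) (Bc (fst \<omega>))}"
        unfolding S1_def Y_def Bc_def honest_C_def honest_D_def honest_B0_def honest_B1_def viewA_def viewB_def alice_data_def
        by auto
      have sb: "{\<omega>. alice_data \<omega> = d \<and> ?C \<omega> = c \<and> ?D \<omega> = bb} = {\<omega>. map projA (snd (snd \<omega>)) = d \<and> Y (fst (snd \<omega>)) (snd (snd \<omega>)) bb}" for bb
        unfolding Y_def honest_C_def honest_D_def viewB_def alice_data_def by auto
      have s2: "S2 \<inter> alice_data -` {d} = {\<omega>. map projA (snd (snd \<omega>)) = d \<and> Y (fst (snd \<omega>)) (snd (snd \<omega>))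
        (emeasure (measure_pmf E) {\<omega>. map projA (snd (snd \<omega>)) = d \<and> Y (fst (snd \<omega>)) (snd (snd \<omega>)) False}
          \<le> emeasure (measure_pmf E) {\<omega>. map projA (snd (snd \<omega>)) = d \<and> Y (fst (snd \<omega>)) (snd (snd \<omega>)) True})}"
      proof -
        have "g n d c = (emeasure (measure_pmf E) {\<omega>. map projA (snd (snd \<omega>)) = d \<and> Y (fst (snd \<omega>)) (snd (snd \<omega>)) False}
          \<le> emeasure (measure_pmf E) {\<omega>. map projA (snd (snd \<omega>)) = d \<and> Y (fst (snd \<omega>)) (snd (snd \<omega>)) True})"
          unfolding g_def E_def[symmetric] sb ..
        moreover have "S2 \<inter> alice_data -` {d} = {\<omega>. map projA (snd (snd \<omega>)) = d \<and> Y (fst (snd \<omega>)) (snd (snd \<omega>)) (g n d c)}"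
          unfolding S2_def Y_def honest_C_def honest_D_def viewB_def alice_data_def by auto
        ultimately show ?thesis by simp
      qed
      show "emeasure (measure_pmf E) (S1 \<inter> alice_data -` {d}) \<le> emeasure (measure_pmf E) (S2 \<inter> alice_data -` {d})"
        unfolding s1 s2 Eeq by (rule pointwise[where R=R and a=a and b=b, OF Rp])
    qed
    then have le': "measure_pmf.prob E S1 \<le> measure_pmf.prob E S2"
      by (simp add: measure_pmf.emeasure_eq_measure)
    define Corr where "Corr = {\<omega>. ?D \<omega> = (if ?C \<omega> then ?B1 \<omega> else ?B0 \<omega>)}"
    have "{\<omega>. ?C \<omega> = c} \<subseteq> S1 \<union> (UNIV - Corr)" unfolding S1_def Corr_def by auto
    then have "measure_pmf.prob E {\<omega>. ?C \<omega> = c} \<le> measure_pmf.prob E (S1 \<union> (UNIV - Corr))"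
      by (rule measure_pmf.finite_measure_mono) simp
    also have "\<dots> \<le> measure_pmf.prob E S1 + measure_pmf.prob E (UNIV - Corr)"
      by (rule measure_subadditive) (auto simp: measure_pmf.emeasure_finite)
    also have "measure_pmf.prob E (UNIV - Corr) = 1 - measure_pmf.prob E Corr"
      using measure_pmf.prob_compl[of Corr E] by simp
    finally have "measure_pmf.prob E S1 \<ge> 1/2 - \<epsilon> n" using half corr(2) unfolding Corr_def by linarith
    then show ?thesis using le' half unfolding S2_def by (simp add: field_simps)
  qed
  show ?thesis
    apply (rule exI[of _ "\<lambda>n. 2 * \<epsilon> n"], rule exI[of _ g])
    using negl2[OF assms(2)] main by (simp add: Let_def)
qed


end
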